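(* Let $M_1=(E,r_1)$ and $M_2=(E,r_2)$ be demi-matroids. Then $\mathcal{E}_{M_1}\subseteq\mathcal{E}_{M_2}\iff \mathcal{E}_{M_2^*}\subseteq\mathcal{E}_{M_1^*}\iff \mathcal{E}_{\overline{M_1}}\subseteq\mathcal{E}_{\overline{M_2}}.$
   Context: A demi-matroid is a pair $(E,r)$ with $E$ finite and $r:2^E\to\mathbb{N}$ satisfying $r(\emptyset)=0$ and $r(X)\le r(X\cup\{x\})\le r(X)+1$ for all $X\subseteq E$, $x\in E$. For a demi-matroid $M=(E,r)$: its (first) dual is $M^*=(E,r^* )$ with $r^*(X)=|X|+r(E\setminus X)-r(E)$; its supplement (second) dual is $\overline{M}=(E,\overline{r})$ with $\overline{r}(X)=r(E)-r(E\setminus X)$; both are demi-matroids. Also $\mathcal{E}_M=\{(X,x): X\subseteq E,\ x\in X,\ r(X\setminus\{x\})=r(X)\}$. *)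

theory Defs
  imports Main
begin

definition demi_matroid :: "'a set \<Rightarrow> ('a set \<Rightarrow> nat) \<Rightarrow> bool" where
  "demi_matroid E r \<longleftrightarrow> finite E \<and> r {} = 0 \<and>
     (\<forall>X x. X \<subseteq> E \<and> x \<in> E \<longrightarrow> r X \<le> r (insert x X) \<and> r (insert x X) \<le> r X + 1)"

text \<open>First dual: r*(X) = |X| + r(E - X) - r(E). (Nonnegative for demi-matroids.)\<close>
definition dual_rank :: "'a set \<Rightarrow> ('a set \<Rightarrow> nat) \<Rightarrow> ('a set \<Rightarrow> nat)" where
  "dual_rank E r = (\<lambda>X. card X + r (E - X) - r E)"

definition supp_rank :: "'a set \<Rightarrow> ('a set \<Rightarrow> nat) \<Rightarrow> ('a set \<Rightarrow> nat)" where
  "supp_rank E r = (\<lambda>X. r E - r (E - X))"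

definition Epairs :: "'a set \<Rightarrow> ('a set \<Rightarrow> nat) \<Rightarrow> ('a set \<times> 'a) set" where
  "Epairs E r = {(X, x). X \<subseteq> E \<and> x \<in> X \<and> r (X - {x}) = r X}"

end

theory Submission
  imports Defs
begin

lemma dm_bounds:
  assumes dm: "demi_matroid E r" and A: "A \<subseteq> E" and Y: "Y \<subseteq> E"
  shows "r Y \<le> r (Y \<union> A) \<and> r (Y \<union> A) \<le> r Y + card A"
proof -
  have fin: "finite A" using dm A finite_subset unfolding demi_matroid_def by blast
  from fin A show ?thesis
  proof (induction A rule: finite_induct)
    case empty then show ?case by simp
  next
    case (insert a F)
    have "a \<in> E" "Y \<union> F \<subseteq> E" using insert.prems Y by auto
    then have "r (Y \<union> F) \<le> r (insert a (Y \<union> F)) \<and> r (insert a (Y \<union> F)) \<le> r (Y \<union> F) + 1"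
      using dm unfolding demi_matroid_def by blast
    moreover have "Y \<union> insert a F = insert a (Y \<union> F)" by auto
    ultimately show ?case using insert by auto
  qed
qed

lemma dm_step:
  assumes dm: "demi_matroid E r" and "Y \<subseteq> E" "x \<in> E"
  shows "r Y \<le> r (insert x Y) \<and> r (insert x Y) \<le> r Y + 1"
  using assms unfolding demi_matroid_def by blast

lemma dual_mem:
  assumes dm: "demi_matroid E r" and X: "X \<subseteq> E" "x \<in> X"
  shows "(X, x) \<in> Epairs E (dual_rank E r) \<longleftrightarrow> \<not> ((insert x (E - X), x) \<in> Epairs E r)"
proof -
  have fin: "finite E" using dm unfolding demi_matroid_def by blast
  have eq1: "E - (X - {x}) = insert x (E - X)" using X by auto
  have eq2: "insert x (E - X) - {x} = E - X" using X by auto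
  have u1: "(E - X) \<union> X = E" using X by auto
  have b1: "r E \<le> r (E - X) + card X"
    using dm_bounds[OF dm X(1), of "E - X"] u1 by simp
  have u2: "insert x (E - X) \<union> (X - {x}) = E" using X by auto
  have b2: "r E \<le> r (insert x (E - X)) + card (X - {x})"
    using dm_bounds[OF dm, of "X - {x}" "insert x (E - X)"] X u2 by auto
  have fX: "finite X" using X fin finite_subset by blast
  have cX: "card X = card (X - {x}) + 1" using card_Suc_Diff1[OF fX X(2)] by simp
  have st: "r (E - X) \<le> r (insert x (E - X)) \<and> r (insert x (E - X)) \<le> r (E - X) + 1"
    using dm_step[OF dm, of "E - X" x] X by auto
  have L: "(X, x) \<in> Epairs E (dual_rank E r) \<longleftrightarrow>
     card (X - {x}) + r (insert x (E - X)) - r E = card X + r (E - X) - r E"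
    unfolding Epairs_def dual_rank_def using X eq1 by simp
  have R: "(insert x (E - X), x) \<in> Epairs E r \<longleftrightarrow> r (E - X) = r (insert x (E - X))"
    unfolding Epairs_def using X eq2 by auto
  have "card (X - {x}) + r (insert x (E - X)) - r E = card X + r (E - X) - r E
        \<longleftrightarrow> r (E - X) \<noteq> r (insert x (E - X))"
    using b1 b2 cX st by linarith
  then show ?thesis using L R by simp
qed

lemma supp_mem:
  assumes dm: "demi_matroid E r" and X: "X \<subseteq> E" "x \<in> X"
  shows "(X, x) \<in> Epairs E (supp_rank E r) \<longleftrightarrow> (insert x (E - X), x) \<in> Epairs E r"
proof -
  have eq1: "E - (X - {x}) = insert x (E - X)" using X by auto
  have eq2: "insert x (E - X) - {x} = E - X" using X by auto
  have u1: "(E - X) \<union> X = E" using X by auto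
  have m1: "r (E - X) \<le> r E"
    using dm_bounds[OF dm, of "X" "E - X"] X u1 by simp
  have u2: "insert x (E - X) \<union> (X - {x}) = E" using X by auto
  have m2: "r (insert x (E - X)) \<le> r E"
    using dm_bounds[OF dm, of "X - {x}" "insert x (E - X)"] X u2 by auto
  have L: "(X, x) \<in> Epairs E (supp_rank E r) \<longleftrightarrow>
     r E - r (insert x (E - X)) = r E - r (E - X)"
    unfolding Epairs_def supp_rank_def using X eq1 by simp
  have R: "(insert x (E - X), x) \<in> Epairs E r \<longleftrightarrow> r (E - X) = r (insert x (E - X))"
    unfolding Epairs_def using X eq2 by auto
  have "r E - r (insert x (E - X)) = r E - r (E - X) \<longleftrightarrow> r (E - X) = r (insert x (E - X))"
    using m1 m2 by linarith
  then show ?thesis using L R by simp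
qed

lemma Epairs_dom: "(X, x) \<in> Epairs E r \<Longrightarrow> X \<subseteq> E \<and> x \<in> X"
  unfolding Epairs_def by auto

lemma invol:
  assumes "X \<subseteq> E" "x \<in> X"
  shows "insert x (E - insert x (E - X)) = X" "insert x (E - X) \<subseteq> E" "x \<in> insert x (E - X)"
  using assms by auto

theorem mainTheorem6:
  fixes E :: "'a set" and r1 r2 :: "'a set \<Rightarrow> nat"
  assumes "demi_matroid E r1" and "demi_matroid E r2"
  shows "(Epairs E r1 \<subseteq> Epairs E r2 \<longleftrightarrow> Epairs E (dual_rank E r2) \<subseteq> Epairs E (dual_rank E r1))
       \<and> (Epairs E (dual_rank E r2) \<subseteq> Epairs E (dual_rank E r1) \<longleftrightarrow> Epairs E (supp_rank E r1) \<subseteq> Epairs E (supp_rank E r2))"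
proof -
  have A: "Epairs E r1 \<subseteq> Epairs E r2 \<longleftrightarrow> Epairs E (dual_rank E r2) \<subseteq> Epairs E (dual_rank E r1)"
  proof
    assume h: "Epairs E r1 \<subseteq> Epairs E r2"
    show "Epairs E (dual_rank E r2) \<subseteq> Epairs E (dual_rank E r1)"
    proof (clarify)
      fix X x assume m: "(X, x) \<in> Epairs E (dual_rank E r2)"
      then have d: "X \<subseteq> E" "x \<in> X" using Epairs_dom[OF m] by auto
      have "(insert x (E - X), x) \<notin> Epairs E r2" using m dual_mem[OF assms(2) d] by simp
      then have "(insert x (E - X), x) \<notin> Epairs E r1" by (rule contra_subsetD[OF h])
      then show "(X, x) \<in> Epairs E (dual_rank E r1)" using dual_mem[OF assms(1) d] by simp
    qed
  next
    assume h: "Epairs E (dual_rank E r2) \<subseteq> Epairs E (dual_rank E r1)"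
    show "Epairs E r1 \<subseteq> Epairs E r2"
    proof (clarify)
      fix Z z assume m: "(Z, z) \<in> Epairs E r1"
      then have d: "Z \<subseteq> E" "z \<in> Z" using Epairs_dom[OF m] by auto
      note i = invol[OF d]
      have "(insert z (E - Z), z) \<notin> Epairs E (dual_rank E r1)"
        using dual_mem[OF assms(1) i(2,3)] i(1) m by simp
      then have "(insert z (E - Z), z) \<notin> Epairs E (dual_rank E r2)" by (rule contra_subsetD[OF h])
      then show "(Z, z) \<in> Epairs E r2"
        using dual_mem[OF assms(2) i(2,3)] i(1) by simp
    qed
  qed
  have B: "Epairs E r1 \<subseteq> Epairs E r2 \<longleftrightarrow> Epairs E (supp_rank E r1) \<subseteq> Epairs E (supp_rank E r2)"
  proof
    assume h: "Epairs E r1 \<subseteq> Epairs E r2"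
    show "Epairs E (supp_rank E r1) \<subseteq> Epairs E (supp_rank E r2)"
    proof (clarify)
      fix X x assume m: "(X, x) \<in> Epairs E (supp_rank E r1)"
      then have d: "X \<subseteq> E" "x \<in> X" using Epairs_dom[OF m] by auto
      have "(insert x (E - X), x) \<in> Epairs E r1" using m supp_mem[OF assms(1) d] by simp
      then have "(insert x (E - X), x) \<in> Epairs E r2" by (rule subsetD[OF h])
      then show "(X, x) \<in> Epairs E (supp_rank E r2)" using supp_mem[OF assms(2) d] by simp
    qed
  next
    assume h: "Epairs E (supp_rank E r1) \<subseteq> Epairs E (supp_rank E r2)"
    show "Epairs E r1 \<subseteq> Epairs E r2"
    proof (clarify)
      fix Z z assume m: "(Z, z) \<in> Epairs E r1"
      then have d: "Z \<subseteq> E" "z \<in> Z" using Epairs_dom[OF m] by auto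
      note i = invol[OF d]
      have "(insert z (E - Z), z) \<in> Epairs E (supp_rank E r1)"
        using supp_mem[OF assms(1) i(2,3)] i(1) m by simp
      then have "(insert z (E - Z), z) \<in> Epairs E (supp_rank E r2)" by (rule subsetD[OF h])
      then show "(Z, z) \<in> Epairs E r2"
        using supp_mem[OF assms(2) i(2,3)] i(1) by simp
    qed
  qed
  show ?thesis using A B by simp
qed

end
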